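(* Let $S$ be a $\mathcal{C}$-semigroup. Then $\mathrm{SG}(S)=\max_{\le_S}\mathrm{FG}(S)$, the set of maximal elements of $\mathrm{FG}(S)$ with respect to $\le_S$.
   Context: An integer cone $\mathcal{C}\subseteq\mathbb{N}^p$ is the set of integer points of a finitely generated rational cone in $\mathbb{Q}_{\ge0}^p$. A $\mathcal{C}$-semigroup is a subset $S\subseteq\mathcal{C}$ containing $0$, closed under addition, with $\mathcal{C}\setminus S$ finite; $\mathcal{H}(S)=\mathcal{C}\setminus S$. $\mathbf x\le_S\mathbf y$ means $\mathbf y-\mathbf x\in S$. $\mathrm{PF}(S)=\{\mathbf x\in\mathcal{H}(S)\mid\mathbf x+(S\setminus\{0\})\subseteq S\}$, $\mathrm{SG}(S)=\{\mathbf x\in\mathrm{PF}(S)\mid 2\mathbf x\in S\}$, and $\mathrm{FG}(S)=\{\mathbf x\in\mathcal{H}(S)\mid 2\mathbf x\in S,\ 3\mathbf x\in S\}$. *)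

theory Defs
  imports Complex_Main
begin

text \<open>Points of \<open>\<nat>^p\<close> (inside \<open>\<int>^p\<close>) are functions \<open>'n \<Rightarrow> int\<close> on a finite index type
  \<open>'n\<close> with \<open>CARD('n) = p\<close>.\<close>

definition integer_cone :: "('n::finite \<Rightarrow> int) set \<Rightarrow> bool" where
  "integer_cone C \<longleftrightarrow>
     (\<exists>G :: ('n \<Rightarrow> rat) set. finite G \<and> (\<forall>g\<in>G. \<forall>i. g i \<ge> 0) \<and>
        C = {x. \<exists>c :: ('n \<Rightarrow> rat) \<Rightarrow> rat. (\<forall>g\<in>G. c g \<ge> 0) \<and>
                   (\<forall>i. of_int (x i) = (\<Sum>g\<in>G. c g * g i))})"

definition C_semigroup :: "('n::finite \<Rightarrow> int) set \<Rightarrow> ('n \<Rightarrow> int) set \<Rightarrow> bool" where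
  "C_semigroup C S \<longleftrightarrow> integer_cone C \<and> S \<subseteq> C \<and> (\<lambda>i. 0) \<in> S \<and>
     (\<forall>x\<in>S. \<forall>y\<in>S. (\<lambda>i. x i + y i) \<in> S) \<and> finite (C - S)"

definition gaps :: "('n \<Rightarrow> int) set \<Rightarrow> ('n \<Rightarrow> int) set \<Rightarrow> ('n \<Rightarrow> int) set" where
  "gaps C S = C - S"

definition leS :: "('n \<Rightarrow> int) set \<Rightarrow> ('n \<Rightarrow> int) \<Rightarrow> ('n \<Rightarrow> int) \<Rightarrow> bool" where
  "leS S x y \<longleftrightarrow> (\<lambda>i. y i - x i) \<in> S"

definition PF :: "('n \<Rightarrow> int) set \<Rightarrow> ('n \<Rightarrow> int) set \<Rightarrow> ('n \<Rightarrow> int) set" where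
  "PF C S = {x \<in> gaps C S. \<forall>s \<in> S - {\<lambda>i. 0}. (\<lambda>i. x i + s i) \<in> S}"

definition SG :: "('n \<Rightarrow> int) set \<Rightarrow> ('n \<Rightarrow> int) set \<Rightarrow> ('n \<Rightarrow> int) set" where
  "SG C S = {x \<in> PF C S. (\<lambda>i. 2 * x i) \<in> S}"

definition FG :: "('n \<Rightarrow> int) set \<Rightarrow> ('n \<Rightarrow> int) set \<Rightarrow> ('n \<Rightarrow> int) set" where
  "FG C S = {x \<in> gaps C S. (\<lambda>i. 2 * x i) \<in> S \<and> (\<lambda>i. 3 * x i) \<in> S}"

definition maximals_leS :: "('n \<Rightarrow> int) set \<Rightarrow> ('n \<Rightarrow> int) set \<Rightarrow> ('n \<Rightarrow> int) set" where
  "maximals_leS S A = {x \<in> A. \<forall>y \<in> A. leS S x y \<longrightarrow> y = x}"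

end

theory Submission
  imports Defs
begin

lemma cone_add:
  assumes "integer_cone C" "x \<in> C" "y \<in> C"
  shows "(\<lambda>i. x i + y i) \<in> C"
proof -
  obtain G :: "('a \<Rightarrow> rat) set" where G: "C = {x. \<exists>c :: ('a \<Rightarrow> rat) \<Rightarrow> rat. (\<forall>g\<in>G. c g \<ge> 0) \<and>
                   (\<forall>i. of_int (x i) = (\<Sum>g\<in>G. c g * g i))}"
    using assms(1) unfolding integer_cone_def by blast
  obtain c where c: "\<forall>g\<in>G. c g \<ge> 0" "\<forall>i. of_int (x i) = (\<Sum>g\<in>G. c g * g i)"
    using assms(2) G by blast
  obtain d where d: "\<forall>g\<in>G. d g \<ge> 0" "\<forall>i. of_int (y i) = (\<Sum>g\<in>G. d g * g i)"
    using assms(3) G by blast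
  have "\<forall>g\<in>G. (\<lambda>g. c g + d g) g \<ge> 0" using c d by auto
  moreover have "\<forall>i. of_int (x i + y i) = (\<Sum>g\<in>G. (\<lambda>g. c g + d g) g * g i)"
    using c d by (simp add: distrib_right sum.distrib)
  ultimately have "\<exists>e :: ('a \<Rightarrow> rat) \<Rightarrow> rat. (\<forall>g\<in>G. e g \<ge> 0) \<and>
                   (\<forall>i. of_int (x i + y i) = (\<Sum>g\<in>G. e g * g i))"
    by (intro exI[of _ "\<lambda>g. c g + d g"]) simp
  thus ?thesis using G by simp
qed

theorem mainTheorem16:
  fixes C S :: "('n::finite \<Rightarrow> int) set"
  assumes "C_semigroup C S"
  shows "SG C S = maximals_leS S (FG C S)"
proof
  have cone: "integer_cone C" and SC: "S \<subseteq> C" and z: "(\<lambda>i. 0) \<in> S"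
    and add: "\<And>x y. x \<in> S \<Longrightarrow> y \<in> S \<Longrightarrow> (\<lambda>i. x i + y i) \<in> S"
    using assms unfolding C_semigroup_def by auto
  show "SG C S \<subseteq> maximals_leS S (FG C S)"
  proof
    fix x assume x: "x \<in> SG C S"
    hence xg: "x \<in> C" "x \<notin> S" and x2: "(\<lambda>i. 2 * x i) \<in> S"
      and pf: "\<And>s. s \<in> S \<Longrightarrow> s \<noteq> (\<lambda>i. 0) \<Longrightarrow> (\<lambda>i. x i + s i) \<in> S"
      unfolding SG_def PF_def gaps_def by auto
    have "(\<lambda>i. 2 * x i) \<noteq> (\<lambda>i. 0)"
    proof
      assume "(\<lambda>i. 2 * x i) = (\<lambda>i. 0)"
      from fun_cong[OF this] have "\<And>i. 2 * x i = 0" by simp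
      hence "x = (\<lambda>i. 0)" by (intro ext) simp
      thus False using xg z by simp
    qed
    moreover have "(\<lambda>i. x i + 2 * x i) = (\<lambda>i. 3 * x i)" by (rule ext) simp
    ultimately have "(\<lambda>i. 3 * x i) \<in> S" using pf[OF x2] by simp
    hence fg: "x \<in> FG C S" using xg x2 unfolding FG_def gaps_def by auto
    have "\<forall>y \<in> FG C S. leS S x y \<longrightarrow> y = x"
    proof (intro ballI impI)
      fix y assume y: "y \<in> FG C S" "leS S x y"
      hence ys: "y \<notin> S" and d: "(\<lambda>i. y i - x i) \<in> S" unfolding FG_def gaps_def leS_def by auto
      show "y = x"
      proof (rule ccontr)
        assume "y \<noteq> x"
        have "(\<lambda>i. y i - x i) \<noteq> (\<lambda>i. 0)"
        proof
          assume "(\<lambda>i. y i - x i) = (\<lambda>i. 0)"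
          from fun_cong[OF this] have "\<And>i. y i - x i = 0" by simp
          hence "y = x" by (intro ext) simp
          thus False using \<open>y \<noteq> x\<close> by contradiction
        qed
        from pf[OF d this] ys show False by simp
      qed
    qed
    thus "x \<in> maximals_leS S (FG C S)" using fg unfolding maximals_leS_def by auto
  qed
  show "maximals_leS S (FG C S) \<subseteq> SG C S"
  proof
    fix x assume x: "x \<in> maximals_leS S (FG C S)"
    hence xg: "x \<in> C" "x \<notin> S" and x2: "(\<lambda>i. 2 * x i) \<in> S" and x3: "(\<lambda>i. 3 * x i) \<in> S"
      and mx: "\<And>y. y \<in> FG C S \<Longrightarrow> leS S x y \<Longrightarrow> y = x"
      unfolding maximals_leS_def FG_def gaps_def by auto
    have "\<forall>s \<in> S - {\<lambda>i. 0}. (\<lambda>i. x i + s i) \<in> S"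
    proof (intro ballI, rule ccontr)
      fix s assume s: "s \<in> S - {\<lambda>i. 0}" and ns: "(\<lambda>i. x i + s i) \<notin> S"
      have sS: "s \<in> S" using s by auto
      have "(\<lambda>i. s i + s i) = (\<lambda>i. 2 * s i)" by (rule ext) simp
      hence s2: "(\<lambda>i. 2 * s i) \<in> S" using add[OF sS sS] by simp
      have "(\<lambda>i. 2 * s i + s i) = (\<lambda>i. 3 * s i)" by (rule ext) simp
      hence s3: "(\<lambda>i. 3 * s i) \<in> S" using add[OF s2 sS] by simp
      have inC: "(\<lambda>i. x i + s i) \<in> C" using cone_add[OF cone xg(1)] SC sS by auto
      have e2: "(\<lambda>i. 2 * x i + 2 * s i) = (\<lambda>i. 2 * (x i + s i))" by (rule ext) simp
      have e3: "(\<lambda>i. 3 * x i + 3 * s i) = (\<lambda>i. 3 * (x i + s i))" by (rule ext) simp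
      have "(\<lambda>i. 2 * (x i + s i)) \<in> S" using add[OF x2 s2] unfolding e2 .
      moreover have "(\<lambda>i. 3 * (x i + s i)) \<in> S" using add[OF x3 s3] unfolding e3 .
      ultimately have "(\<lambda>i. x i + s i) \<in> FG C S" using inC ns unfolding FG_def gaps_def by auto
      moreover have "leS S x (\<lambda>i. x i + s i)" unfolding leS_def using sS by simp
      ultimately have "(\<lambda>i. x i + s i) = x" using mx by blast
      from fun_cong[OF this] have "\<And>i. x i + s i = x i" by simp
      hence "s = (\<lambda>i. 0)" by (intro ext) simp
      thus False using s by simp
    qed
    thus "x \<in> SG C S" using xg x2 unfolding SG_def PF_def gaps_def by auto
  qed
qed

end
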